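(* Let $\Sigma$ be a finite set of denial constraints, $D$ a nonempty instance, and $0<\epsilon<1$ such that $\epsilon|D|$ is an integer. Let $D_k$ be a set of $\epsilon|D|$ tuples disjoint from $D$, and $D'=D\cup D_k$. Then $$\mathit{inc\text{-}deg}^{c,g_3}(D',\Sigma)\le \mathit{inc\text{-}deg}^{c,g_3}(D,\Sigma)+\frac{1}{1+\frac{1}{\epsilon}} \quad\text{and}\quad \mathit{inc\text{-}deg}^{c,g_3}(D,\Sigma)\le \frac{1}{1-\epsilon}\,\mathit{inc\text{-}deg}^{c,g_3}(D',\Sigma).$$
   Context: A database instance is a finite set of ground atoms (tuples). A denial constraint (DC) is a sentence $\neg\exists\bar x\,(P_1(\bar x_1)\wedge\dots\wedge P_m(\bar x_m)\wedge\varphi)$ with the $P_i$ schema predicates and $\varphi$ a possibly empty conjunction of built-in comparisons. A subset-repair (S-repair) of $D$ wrt. $\Sigma$ is a $\subseteq$-maximal subset $D'\subseteq D$ that satisfies $\Sigma$; a cardinality-repair (C-repair) is an S-repair of maximum cardinality; $\mathit{Crep}(D,\Sigma)$ is the set of C-repairs. For nonempty $D$, $$\mathit{inc\text{-}deg}^{c,g_3}(D,\Sigma)=\frac{|D|-\max\{|D'| : D'\in \mathit{Crep}(D,\Sigma)\}}{|D|}.$$ *)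

theory Defs
  imports Main "HOL-Library.Extended_Nat"
begin

text \<open>Ground atoms: a predicate name together with a tuple of constants.
  A database instance is a finite set of ground atoms.\<close>
type_synonym 'v atom = "string \<times> 'v list"

datatype 'v dterm = Var nat | Const 'v

datatype cmp = Eq | Neq | Lt | Le | Gt | Ge

text \<open>A denial constraint  not exists x. P1(x1) and ... and Pm(xm) and phi:
  a list of relational atoms (the body) and a list of built-in comparisons (phi).\<close>
datatype 'v dc = DC (dc_body: "(string \<times> 'v dterm list) list")
                    (dc_cmps: "('v dterm \<times> cmp \<times> 'v dterm) list")

definition is_dc :: "'v dc \<Rightarrow> bool" where
  "is_dc \<sigma> \<longleftrightarrow> dc_body \<sigma> \<noteq> []"

fun eval_term :: "(nat \<Rightarrow> 'v) \<Rightarrow> 'v dterm \<Rightarrow> 'v" where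
  "eval_term \<nu> (Var i) = \<nu> i"
| "eval_term \<nu> (Const c) = c"

fun eval_cmp :: "cmp \<Rightarrow> 'v::linorder \<Rightarrow> 'v \<Rightarrow> bool" where
  "eval_cmp Eq a b = (a = b)"
| "eval_cmp Neq a b = (a \<noteq> b)"
| "eval_cmp Lt a b = (a < b)"
| "eval_cmp Le a b = (a \<le> b)"
| "eval_cmp Gt a b = (a > b)"
| "eval_cmp Ge a b = (a \<ge> b)"

definition violates :: "'v::linorder atom set \<Rightarrow> 'v dc \<Rightarrow> bool" where
  "violates D \<sigma> \<longleftrightarrow> (\<exists>\<nu>.
      (\<forall>(P, ts) \<in> set (dc_body \<sigma>). (P, map (eval_term \<nu>) ts) \<in> D) \<and>
      (\<forall>(s, c, t) \<in> set (dc_cmps \<sigma>). eval_cmp c (eval_term \<nu> s) (eval_term \<nu> t)))"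

definition satisfies :: "'v::linorder atom set \<Rightarrow> 'v dc set \<Rightarrow> bool" where
  "satisfies D \<Sigma> \<longleftrightarrow> (\<forall>\<sigma> \<in> \<Sigma>. \<not> violates D \<sigma>)"

definition is_srepair :: "'v::linorder atom set \<Rightarrow> 'v dc set \<Rightarrow> 'v atom set \<Rightarrow> bool" where
  "is_srepair D \<Sigma> D' \<longleftrightarrow> D' \<subseteq> D \<and> satisfies D' \<Sigma> \<and>
      (\<forall>D''. D' \<subset> D'' \<and> D'' \<subseteq> D \<longrightarrow> \<not> satisfies D'' \<Sigma>)"

definition Crep :: "'v::linorder atom set \<Rightarrow> 'v dc set \<Rightarrow> 'v atom set set" where
  "Crep D \<Sigma> = {D'. is_srepair D \<Sigma> D' \<and>
      (\<forall>D''. is_srepair D \<Sigma> D'' \<longrightarrow> card D'' \<le> card D')}"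

definition inc_deg_c_g3 :: "'v::linorder atom set \<Rightarrow> 'v dc set \<Rightarrow> real" where
  "inc_deg_c_g3 D \<Sigma> =
     (real (card D) - real (Max (card ` Crep D \<Sigma>))) / real (card D)"

end

theory Submission
  imports Defs
begin

lemma sat_mono: "satisfies T \<Sigma> \<Longrightarrow> S \<subseteq> T \<Longrightarrow> satisfies S \<Sigma>"
  unfolding satisfies_def violates_def by fast

lemma sat_empty: "\<forall>\<sigma> \<in> \<Sigma>. is_dc \<sigma> \<Longrightarrow> satisfies {} \<Sigma>"
  unfolding satisfies_def violates_def is_dc_def
  by (metis (no_types, lifting) case_prodE empty_iff list.set_sel(1))

definition msize where
  "msize D \<Sigma> = Max (card ` {S. S \<subseteq> D \<and> satisfies S \<Sigma>})"

lemma msize_props: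
  assumes "finite D" "satisfies {} \<Sigma>"
  shows "Max (card ` Crep D \<Sigma>) = msize D \<Sigma>"
    and "\<And>S. S \<subseteq> D \<Longrightarrow> satisfies S \<Sigma> \<Longrightarrow> card S \<le> msize D \<Sigma>"
    and "\<exists>S. S \<subseteq> D \<and> satisfies S \<Sigma> \<and> card S = msize D \<Sigma>"
    and "msize D \<Sigma> \<le> card D"
proof -
  let ?F = "{S. S \<subseteq> D \<and> satisfies S \<Sigma>}"
  have fF: "finite ?F" by (rule finite_subset[of _ "Pow D"]) (auto simp: assms(1))
  have ne: "?F \<noteq> {}" using assms(2) by auto
  show ge: "\<And>S. S \<subseteq> D \<Longrightarrow> satisfies S \<Sigma> \<Longrightarrow> card S \<le> msize D \<Sigma>"
    unfolding msize_def using fF by (intro Max_ge) auto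
  have "msize D \<Sigma> \<in> card ` ?F" unfolding msize_def using fF ne by (intro Max_in) auto
  then obtain S0 where S0: "S0 \<subseteq> D" "satisfies S0 \<Sigma>" "card S0 = msize D \<Sigma>" by auto
  then show "\<exists>S. S \<subseteq> D \<and> satisfies S \<Sigma> \<and> card S = msize D \<Sigma>" by blast
  show "msize D \<Sigma> \<le> card D" using S0 card_mono assms(1) by metis
  have sr: "is_srepair D \<Sigma> S0"
    unfolding is_srepair_def
  proof (intro conjI allI impI S0(1,2))
    fix D'' assume h: "S0 \<subset> D'' \<and> D'' \<subseteq> D"
    show "\<not> satisfies D'' \<Sigma>"
    proof
      assume "satisfies D'' \<Sigma>"
      then have "card D'' \<le> msize D \<Sigma>" using ge h by blast
      moreover have "card S0 < card D''" using h assms(1) psubset_card_mono finite_subset by blast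
      ultimately show False using S0 by simp
    qed
  qed
  have inC: "S0 \<in> Crep D \<Sigma>" unfolding Crep_def
    using sr ge S0(3) by (auto simp: is_srepair_def)
  have fC: "finite (Crep D \<Sigma>)"
    by (rule finite_subset[of _ "Pow D"]) (auto simp: Crep_def is_srepair_def assms(1))
  show "Max (card ` Crep D \<Sigma>) = msize D \<Sigma>"
    apply (rule Max_eqI)
    using fC apply simp
    using ge apply (auto simp: Crep_def is_srepair_def)[1]
    using inC S0(3) by force
qed

lemma arith1:
  fixes n k c c' :: real
  assumes "n > 0" "k \<ge> 0" "c \<le> c'" "c \<le> n"
  shows "(n + k - c') / (n + k) \<le> (n - c) / n + k / (n + k)"
proof -
  have "(n + k - c') / (n + k) = (n - c') / (n + k) + k / (n + k)"
    by (simp add: add_divide_distrib[symmetric])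
  also have "(n - c') / (n + k) \<le> (n - c) / (n + k)"
    using assms by (intro divide_right_mono) auto
  also have "(n - c) / (n + k) \<le> (n - c) / n"
    using assms by (intro divide_left_mono) auto
  finally show ?thesis by simp
qed

lemma arith2:
  fixes n e c c' :: real
  assumes "n > 0" "0 < e" "e < 1" "c' \<le> c + e * n" "c' \<le> n + e * n"
  shows "(n - c) / n \<le> (1 / (1 - e)) * ((n + e * n - c') / (n + e * n))"
proof -
  have "(n - c) / n \<le> (n + e * n - c') / n"
    using assms by (intro divide_right_mono) auto
  also have "\<dots> \<le> (n + e * n - c') / (n * (1 - e*e))"
    using assms mult_strict_mono[of e 1 e 1] by (intro divide_left_mono mult_pos_pos) (auto simp: mult_le_cancel_left1 mult_less_cancel_left1 mult_left_le_one_le)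
  also have "\<dots> = (1 / (1 - e)) * ((n + e * n - c') / (n + e * n))"
  proof -
    have "n * (1 - e*e) = (1 - e) * (n + e * n)" by (simp add: algebra_simps)
    then show ?thesis by simp
  qed
  finally show ?thesis .
qed

theorem proposition2:
  fixes \<Sigma> :: "'v::linorder dc set" and D Dk :: "'v atom set" and \<epsilon> :: real
  assumes "finite \<Sigma>" and "\<forall>\<sigma> \<in> \<Sigma>. is_dc \<sigma>"
    and "finite D" and "D \<noteq> {}"
    and "0 < \<epsilon>" and "\<epsilon> < 1"
    and "\<epsilon> * real (card D) \<in> \<int>"
    and "finite Dk" and "real (card Dk) = \<epsilon> * real (card D)"
    and "Dk \<inter> D = {}"
  shows "inc_deg_c_g3 (D \<union> Dk) \<Sigma> \<le> inc_deg_c_g3 D \<Sigma> + 1 / (1 + 1 / \<epsilon>)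
       \<and> inc_deg_c_g3 D \<Sigma> \<le> (1 / (1 - \<epsilon>)) * inc_deg_c_g3 (D \<union> Dk) \<Sigma>"
proof -
  have se: "satisfies {} \<Sigma>" using assms(2) by (rule sat_empty)
  have fU: "finite (D \<union> Dk)" using assms by simp
  note P = msize_props[OF assms(3) se]
  note Q = msize_props[OF fU se]
  define n where "n = real (card D)"
  define k where "k = real (card Dk)"
  define c where "c = real (msize D \<Sigma>)"
  define c' where "c' = real (msize (D \<union> Dk) \<Sigma>)"
  have n0: "n > 0" using assms(3,4) by (simp add: n_def card_gt_0_iff)
  have cardU: "real (card (D \<union> Dk)) = n + k"
    using assms(3,8,10) by (simp add: n_def k_def card_Un_disjoint inf_commute)
  have i1: "inc_deg_c_g3 D \<Sigma> = (n - c) / n"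
    by (simp add: inc_deg_c_g3_def P(1) n_def c_def)
  have i2: "inc_deg_c_g3 (D \<union> Dk) \<Sigma> = (n + k - c') / (n + k)"
    by (simp add: inc_deg_c_g3_def Q(1) cardU c'_def)
  have cc: "c \<le> c'"
  proof -
    obtain S where "S \<subseteq> D" "satisfies S \<Sigma>" "card S = msize D \<Sigma>" using P(3) by blast
    then show ?thesis using Q(2)[of S] by (auto simp: c_def c'_def)
  qed
  have cn: "c \<le> n" using P(4) by (simp add: c_def n_def)
  have cn': "c' \<le> n + k" using Q(4) cardU by (simp add: c'_def)
  have ck: "c' \<le> c + k"
  proof -
    obtain S where S: "S \<subseteq> D \<union> Dk" "satisfies S \<Sigma>" "card S = msize (D \<union> Dk) \<Sigma>"
      using Q(3) by blast
    have fS: "finite S" using S(1) fU finite_subset by blast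
    have "card (S \<inter> D) \<le> msize D \<Sigma>" using P(2) sat_mono[OF S(2)] by auto
    moreover have "S \<subseteq> (S \<inter> D) \<union> Dk" using S(1) by blast
    then have "card S \<le> card (S \<inter> D) + card Dk"
      by (meson card_Un_le card_mono assms(8) fS finite_Int finite_UnI le_trans)
    ultimately show ?thesis using S(3) by (simp add: c_def c'_def k_def)
  qed
  have e1: "1 / (1 + 1 / \<epsilon>) = k / (n + k)"
    using assms(5) n0 assms(9) by (simp add: k_def n_def field_simps)
  have keq: "k = \<epsilon> * n" using assms(9) by (simp add: k_def n_def)
  show ?thesis
    unfolding i1 i2 e1
    using arith1[OF n0 _ cc cn] arith2[OF n0 assms(5,6), of c' c] ck cn' keq assms(5) n0
    by (simp add: k_def)
qed

end
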